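(* Let $\Lambda$ be an artin algebra, and let $f: X\to Y$ and $f': X'\to Y$ be epimorphisms of $\Lambda$-modules with isomorphic kernels. If there is $h: X\to X'$ with $f=f'h$, then $X'$ is a Riedtmann–Zwara degeneration of $X$.
   Context: Modules are finite length left $\Lambda$-modules. A module $M'$ is a Riedtmann–Zwara degeneration of $M$ if there exist a module $K$ and an exact sequence $0\to K\to K\oplus M\to M'\to 0$. *)

theory Defs
  imports "HOL-Algebra.Algebra"
begin

(* Left modules over a (not necessarily commutative) ring L, using the
   record type of HOL-Algebra.Module; only the additive structure and smult
   of a module record are meaningful. *)

definition lmodule :: "('r, 'x) ring_scheme \<Rightarrow> ('r, 'a) module \<Rightarrow> bool" where
  "lmodule L M \<longleftrightarrow> ring L \<and> abelian_group M \<and>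
     (\<forall>a\<in>carrier L. \<forall>x\<in>carrier M. smult M a x \<in> carrier M) \<and>
     (\<forall>a\<in>carrier L. \<forall>b\<in>carrier L. \<forall>x\<in>carrier M.
         smult M (a \<oplus>\<^bsub>L\<^esub> b) x = smult M a x \<oplus>\<^bsub>M\<^esub> smult M b x) \<and>
     (\<forall>a\<in>carrier L. \<forall>x\<in>carrier M. \<forall>y\<in>carrier M.
         smult M a (x \<oplus>\<^bsub>M\<^esub> y) = smult M a x \<oplus>\<^bsub>M\<^esub> smult M a y) \<and>
     (\<forall>a\<in>carrier L. \<forall>b\<in>carrier L. \<forall>x\<in>carrier M.
         smult M (a \<otimes>\<^bsub>L\<^esub> b) x = smult M a (smult M b x)) \<and>
     (\<forall>x\<in>carrier M. smult M \<one>\<^bsub>L\<^esub> x = x)"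

definition lsubmodule :: "('r, 'x) ring_scheme \<Rightarrow> 'a set \<Rightarrow> ('r, 'a) module \<Rightarrow> bool" where
  "lsubmodule L N M \<longleftrightarrow> N \<subseteq> carrier M \<and> \<zero>\<^bsub>M\<^esub> \<in> N \<and>
     (\<forall>x\<in>N. \<forall>y\<in>N. x \<oplus>\<^bsub>M\<^esub> y \<in> N) \<and>
     (\<forall>x\<in>N. \<ominus>\<^bsub>M\<^esub> x \<in> N) \<and>
     (\<forall>a\<in>carrier L. \<forall>x\<in>N. smult M a x \<in> N)"

definition finite_length :: "('r, 'x) ring_scheme \<Rightarrow> ('r, 'a) module \<Rightarrow> bool" where
  "finite_length L M \<longleftrightarrow> lmodule L M \<and>
     (\<exists>n::nat. \<forall>(k::nat) (c::nat \<Rightarrow> 'a set).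
        (\<forall>i\<le>k. lsubmodule L (c i) M) \<and> (\<forall>i<k. c i \<subset> c (Suc i)) \<longrightarrow> k \<le> n)"

definition lhom :: "('r, 'x) ring_scheme \<Rightarrow> ('r, 'a) module \<Rightarrow> ('r, 'b) module \<Rightarrow> ('a \<Rightarrow> 'b) \<Rightarrow> bool" where
  "lhom L M N f \<longleftrightarrow> f \<in> carrier M \<rightarrow> carrier N \<and>
     (\<forall>x\<in>carrier M. \<forall>y\<in>carrier M. f (x \<oplus>\<^bsub>M\<^esub> y) = f x \<oplus>\<^bsub>N\<^esub> f y) \<and>
     (\<forall>a\<in>carrier L. \<forall>x\<in>carrier M. f (smult M a x) = smult N a (f x))"

definition lker :: "('r, 'a) module \<Rightarrow> ('r, 'b) module \<Rightarrow> ('a \<Rightarrow> 'b) \<Rightarrow> 'a set" where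
  "lker M N f = {x \<in> carrier M. f x = \<zero>\<^bsub>N\<^esub>}"

definition subm :: "('r, 'a) module \<Rightarrow> 'a set \<Rightarrow> ('r, 'a) module" where
  "subm M S = M\<lparr>carrier := S\<rparr>"

definition liso :: "('r, 'x) ring_scheme \<Rightarrow> ('r, 'a) module \<Rightarrow> ('r, 'b) module \<Rightarrow> bool" where
  "liso L M N \<longleftrightarrow> (\<exists>f. lhom L M N f \<and> bij_betw f (carrier M) (carrier N))"

text \<open>Direct sum of modules (the multiplicative fields of the record are irrelevant junk).\<close>
definition dsum :: "('r, 'a) module \<Rightarrow> ('r, 'b) module \<Rightarrow> ('r, 'a \<times> 'b) module" where
  "dsum M N = module.make (carrier M \<times> carrier N)
     (\<lambda>_ _. (\<zero>\<^bsub>M\<^esub>, \<zero>\<^bsub>N\<^esub>))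
     (\<zero>\<^bsub>M\<^esub>, \<zero>\<^bsub>N\<^esub>)
     (\<zero>\<^bsub>M\<^esub>, \<zero>\<^bsub>N\<^esub>)
     (\<lambda>p q. (fst p \<oplus>\<^bsub>M\<^esub> fst q, snd p \<oplus>\<^bsub>N\<^esub> snd q))
     (\<lambda>a p. (smult M a (fst p), smult N a (snd p)))"

definition ring_center :: "('r, 'x) ring_scheme \<Rightarrow> 'r set" where
  "ring_center L = {z \<in> carrier L. \<forall>x\<in>carrier L. z \<otimes>\<^bsub>L\<^esub> x = x \<otimes>\<^bsub>L\<^esub> z}"

definition artinian_ring :: "('r, 'x) ring_scheme \<Rightarrow> bool" where
  "artinian_ring R \<longleftrightarrow> (\<forall>I :: nat \<Rightarrow> 'r set.
     (\<forall>n. ideal (I n) R) \<and> (\<forall>n. I (Suc n) \<subseteq> I n) \<longrightarrow> (\<exists>n. \<forall>m\<ge>n. I m = I n))"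

definition artin_algebra :: "('r, 'x) ring_scheme \<Rightarrow> bool" where
  "artin_algebra L \<longleftrightarrow> ring L \<and>
     (\<exists>C. subring C L \<and> C \<subseteq> ring_center L \<and> artinian_ring (L\<lparr>carrier := C\<rparr>) \<and>
        (\<exists>S. finite S \<and> S \<subseteq> carrier L \<and>
           (\<forall>x\<in>carrier L. \<exists>c \<in> S \<rightarrow> C. x = (\<Oplus>\<^bsub>L\<^esub> s\<in>S. c s \<otimes>\<^bsub>L\<^esub> s))))"

text \<open>Riedtmann--Zwara degeneration: there are a finite length module K and an exact sequence
  0 -> K -> K (+) M -> M' -> 0. K is taken with elements in the element type of M'.\<close>
definition rz_degeneration :: "('r, 'x) ring_scheme \<Rightarrow> ('r, 'a) module \<Rightarrow> ('r, 'c) module \<Rightarrow> bool" where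
  "rz_degeneration L M M' \<longleftrightarrow>
     (\<exists>(K :: ('r, 'c) module) i p.
        finite_length L K \<and>
        lhom L K (dsum K M) i \<and> inj_on i (carrier K) \<and>
        lhom L (dsum K M) M' p \<and> p ` carrier (dsum K M) = carrier M' \<and>
        i ` carrier K = lker (dsum K M) M' p)"

end

theory Submission
  imports Defs
begin

lemma dsum_simps[simp]:
  "carrier (dsum M N) = carrier M \<times> carrier N"
  "p \<oplus>\<^bsub>dsum M N\<^esub> q = (fst p \<oplus>\<^bsub>M\<^esub> fst q, snd p \<oplus>\<^bsub>N\<^esub> snd q)"
  "\<zero>\<^bsub>dsum M N\<^esub> = (\<zero>\<^bsub>M\<^esub>, \<zero>\<^bsub>N\<^esub>)"
  "smult (dsum M N) a p = (smult M a (fst p), smult N a (snd p))"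
  by (simp_all add: dsum_def module.defs)

lemma subm_simps[simp]:
  "\<zero>\<^bsub>subm M S\<^esub> = \<zero>\<^bsub>M\<^esub>" "x \<oplus>\<^bsub>subm M S\<^esub> y = x \<oplus>\<^bsub>M\<^esub> y" "smult (subm M S) = smult M"
  "carrier (subm M S) = S"
  by (simp_all add: subm_def)

lemma lhom_zero:
  assumes "lhom L A B k" "abelian_group A" "abelian_group B"
  shows "k \<zero>\<^bsub>A\<^esub> = \<zero>\<^bsub>B\<^esub>"
proof -
  interpret A: abelian_group A by fact
  interpret B: abelian_group B by fact
  have c: "k \<zero>\<^bsub>A\<^esub> \<in> carrier B" using assms(1) unfolding lhom_def by auto
  have "k \<zero>\<^bsub>A\<^esub> \<oplus>\<^bsub>B\<^esub> k \<zero>\<^bsub>A\<^esub> = k \<zero>\<^bsub>A\<^esub> \<oplus>\<^bsub>B\<^esub> \<zero>\<^bsub>B\<^esub>"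
    using assms(1) c unfolding lhom_def by (metis A.l_zero A.zero_closed B.r_zero)
  then show ?thesis using c by (metis B.add.l_cancel B.zero_closed)
qed

lemma lhom_neg:
  assumes "lhom L A B k" "abelian_group A" "abelian_group B" "x \<in> carrier A"
  shows "k (\<ominus>\<^bsub>A\<^esub> x) = \<ominus>\<^bsub>B\<^esub> k x"
proof -
  interpret A: abelian_group A by fact
  interpret B: abelian_group B by fact
  have c: "\<And>y. y \<in> carrier A \<Longrightarrow> k y \<in> carrier B" using assms(1) unfolding lhom_def by auto
  have "k (\<ominus>\<^bsub>A\<^esub> x) \<oplus>\<^bsub>B\<^esub> k x = \<zero>\<^bsub>B\<^esub>"
    using assms(1,4) lhom_zero[OF assms(1-3)] unfolding lhom_def
    by (metis A.l_neg A.a_inv_closed)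
  then show ?thesis using c assms(4) by (metis B.minus_equality A.a_inv_closed)
qed

lemma lmodule_smult_zero:
  assumes "lmodule L A" "a \<in> carrier L"
  shows "smult A a \<zero>\<^bsub>A\<^esub> = \<zero>\<^bsub>A\<^esub>"
proof -
  have ag: "abelian_group A" using assms(1) unfolding lmodule_def by auto
  interpret A: abelian_group A by fact
  have cl: "\<And>y. y \<in> carrier A \<Longrightarrow> smult A a y \<in> carrier A" using assms(1,2) unfolding lmodule_def by auto
  have ad: "\<And>y z. y \<in> carrier A \<Longrightarrow> z \<in> carrier A \<Longrightarrow> smult A a (y \<oplus>\<^bsub>A\<^esub> z) = smult A a y \<oplus>\<^bsub>A\<^esub> smult A a z"
    using assms(1,2) unfolding lmodule_def by auto
  have "smult A a \<zero>\<^bsub>A\<^esub> \<oplus>\<^bsub>A\<^esub> smult A a \<zero>\<^bsub>A\<^esub> = smult A a \<zero>\<^bsub>A\<^esub> \<oplus>\<^bsub>A\<^esub> \<zero>\<^bsub>A\<^esub>"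
    using ad[of "\<zero>\<^bsub>A\<^esub>" "\<zero>\<^bsub>A\<^esub>"] cl by simp
  then show ?thesis using cl by (metis A.add.l_cancel A.zero_closed)
qed

lemma lmodule_smult_neg:
  assumes "lmodule L A" "a \<in> carrier L" "x \<in> carrier A"
  shows "smult A a (\<ominus>\<^bsub>A\<^esub> x) = \<ominus>\<^bsub>A\<^esub> smult A a x"
proof -
  have ag: "abelian_group A" using assms(1) unfolding lmodule_def by auto
  interpret A: abelian_group A by fact
  have cl: "\<And>y. y \<in> carrier A \<Longrightarrow> smult A a y \<in> carrier A" using assms(1,2) unfolding lmodule_def by auto
  have ad: "\<And>y z. y \<in> carrier A \<Longrightarrow> z \<in> carrier A \<Longrightarrow> smult A a (y \<oplus>\<^bsub>A\<^esub> z) = smult A a y \<oplus>\<^bsub>A\<^esub> smult A a z"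
    using assms(1,2) unfolding lmodule_def by auto
  have z: "smult A a \<zero>\<^bsub>A\<^esub> = \<zero>\<^bsub>A\<^esub>"
  proof -
    have "smult A a \<zero>\<^bsub>A\<^esub> \<oplus>\<^bsub>A\<^esub> smult A a \<zero>\<^bsub>A\<^esub> = smult A a \<zero>\<^bsub>A\<^esub> \<oplus>\<^bsub>A\<^esub> \<zero>\<^bsub>A\<^esub>"
      using ad[of "\<zero>\<^bsub>A\<^esub>" "\<zero>\<^bsub>A\<^esub>"] cl by simp
    then show ?thesis using cl by (metis A.add.l_cancel A.zero_closed)
  qed
  have "smult A a (\<ominus>\<^bsub>A\<^esub> x) \<oplus>\<^bsub>A\<^esub> smult A a x = \<zero>\<^bsub>A\<^esub>"
    using ad[of "\<ominus>\<^bsub>A\<^esub> x" x] assms(3) z by (simp add: A.l_neg)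
  then show ?thesis using cl assms(3) by (metis A.minus_equality A.a_inv_closed)
qed

theorem proposition8p7:
  fixes L :: "'r ring"
    and M :: "('r, 'a) module" and M' :: "('r, 'c) module" and N :: "('r, 'b) module"
    and f :: "'a \<Rightarrow> 'b" and f' :: "'c \<Rightarrow> 'b" and h :: "'a \<Rightarrow> 'c"
  assumes "artin_algebra L"
    and "finite_length L M" and "finite_length L M'" and "finite_length L N"
    and "lhom L M N f" and "f ` carrier M = carrier N"
    and "lhom L M' N f'" and "f' ` carrier M' = carrier N"
    and "liso L (subm M (lker M N f)) (subm M' (lker M' N f'))"
    and "lhom L M M' h" and "\<forall>x\<in>carrier M. f x = f' (h x)"
  shows "rz_degeneration L M M'"
proof -
  define U where "U = lker M N f"
  define U' where "U' = lker M' N f'"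
  have lmM: "lmodule L M" and lmM': "lmodule L M'" and lmN: "lmodule L N"
    using assms(2-4) unfolding finite_length_def by auto
  have agM: "abelian_group M" and agM': "abelian_group M'" and agN: "abelian_group N"
    using lmM lmM' lmN unfolding lmodule_def by auto
  interpret M: abelian_group M by fact
  have smc: "\<And>a x. a \<in> carrier L \<Longrightarrow> x \<in> carrier M \<Longrightarrow> smult M a x \<in> carrier M"
    using lmM unfolding lmodule_def by blast
  have sm'c: "\<And>a x. a \<in> carrier L \<Longrightarrow> x \<in> carrier M' \<Longrightarrow> smult M' a x \<in> carrier M'"
    using lmM' unfolding lmodule_def by blast
  have sm'1: "\<And>a b x. a \<in> carrier L \<Longrightarrow> b \<in> carrier L \<Longrightarrow> x \<in> carrier M' \<Longrightarrow>
         smult M' (a \<oplus>\<^bsub>L\<^esub> b) x = smult M' a x \<oplus>\<^bsub>M'\<^esub> smult M' b x"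
    using lmM' unfolding lmodule_def by blast
  have sm'2: "\<And>a x y. a \<in> carrier L \<Longrightarrow> x \<in> carrier M' \<Longrightarrow> y \<in> carrier M' \<Longrightarrow>
         smult M' a (x \<oplus>\<^bsub>M'\<^esub> y) = smult M' a x \<oplus>\<^bsub>M'\<^esub> smult M' a y"
    using lmM' unfolding lmodule_def by blast
  have sm'3: "\<And>a b x. a \<in> carrier L \<Longrightarrow> b \<in> carrier L \<Longrightarrow> x \<in> carrier M' \<Longrightarrow>
         smult M' (a \<otimes>\<^bsub>L\<^esub> b) x = smult M' a (smult M' b x)"
    using lmM' unfolding lmodule_def by blast
  have sm'4: "\<And>x. x \<in> carrier M' \<Longrightarrow> smult M' \<one>\<^bsub>L\<^esub> x = x"
    using lmM' unfolding lmodule_def by blast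
  interpret M': abelian_group M' by fact
  interpret N: abelian_group N by fact
  have fc: "\<And>x. x \<in> carrier M \<Longrightarrow> f x \<in> carrier N" using assms(5) unfolding lhom_def by auto
  have fa: "\<And>x y. x \<in> carrier M \<Longrightarrow> y \<in> carrier M \<Longrightarrow> f (x \<oplus>\<^bsub>M\<^esub> y) = f x \<oplus>\<^bsub>N\<^esub> f y"
    using assms(5) unfolding lhom_def by auto
  have fs: "\<And>a x. a \<in> carrier L \<Longrightarrow> x \<in> carrier M \<Longrightarrow> f (smult M a x) = smult N a (f x)"
    using assms(5) unfolding lhom_def by auto
  have f'c: "\<And>x. x \<in> carrier M' \<Longrightarrow> f' x \<in> carrier N" using assms(7) unfolding lhom_def by auto
  have f'a: "\<And>x y. x \<in> carrier M' \<Longrightarrow> y \<in> carrier M' \<Longrightarrow> f' (x \<oplus>\<^bsub>M'\<^esub> y) = f' x \<oplus>\<^bsub>N\<^esub> f' y"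
    using assms(7) unfolding lhom_def by auto
  have f's: "\<And>a x. a \<in> carrier L \<Longrightarrow> x \<in> carrier M' \<Longrightarrow> f' (smult M' a x) = smult N a (f' x)"
    using assms(7) unfolding lhom_def by auto
  have hc: "\<And>x. x \<in> carrier M \<Longrightarrow> h x \<in> carrier M'" using assms(10) unfolding lhom_def by auto
  have ha: "\<And>x y. x \<in> carrier M \<Longrightarrow> y \<in> carrier M \<Longrightarrow> h (x \<oplus>\<^bsub>M\<^esub> y) = h x \<oplus>\<^bsub>M'\<^esub> h y"
    using assms(10) unfolding lhom_def by auto
  have hs: "\<And>a x. a \<in> carrier L \<Longrightarrow> x \<in> carrier M \<Longrightarrow> h (smult M a x) = smult M' a (h x)"
    using assms(10) unfolding lhom_def by auto
  have hneg: "\<And>x. x \<in> carrier M \<Longrightarrow> h (\<ominus>\<^bsub>M\<^esub> x) = \<ominus>\<^bsub>M'\<^esub> h x"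
    using lhom_neg[OF assms(10) agM agM'] by blast
  have f'neg: "\<And>x. x \<in> carrier M' \<Longrightarrow> f' (\<ominus>\<^bsub>M'\<^esub> x) = \<ominus>\<^bsub>N\<^esub> f' x"
    using lhom_neg[OF assms(7) agM' agN] by blast
  have f'0: "f' \<zero>\<^bsub>M'\<^esub> = \<zero>\<^bsub>N\<^esub>" using lhom_zero[OF assms(7) agM' agN] .
  have sN0: "\<And>a. a \<in> carrier L \<Longrightarrow> smult N a \<zero>\<^bsub>N\<^esub> = \<zero>\<^bsub>N\<^esub>"
    using lmodule_smult_zero[OF lmN] by blast
  have UM: "U \<subseteq> carrier M" and U'M': "U' \<subseteq> carrier M'" unfolding U_def U'_def lker_def by auto
  have hU: "\<And>x. x \<in> U \<Longrightarrow> h x \<in> U'"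
    using assms(11) hc unfolding U_def U'_def lker_def by auto
  have Uadd: "\<And>x y. x \<in> U \<Longrightarrow> y \<in> U \<Longrightarrow> x \<oplus>\<^bsub>M\<^esub> y \<in> U"
    unfolding U_def lker_def using fa by auto
  have Usm: "\<And>a x. a \<in> carrier L \<Longrightarrow> x \<in> U \<Longrightarrow> smult M a x \<in> U"
    unfolding U_def lker_def using fs sN0 smc by auto
  have U'add: "\<And>x y. x \<in> U' \<Longrightarrow> y \<in> U' \<Longrightarrow> x \<oplus>\<^bsub>M'\<^esub> y \<in> U'"
    unfolding U'_def lker_def using f'a by auto
  have U'sm: "\<And>a x. a \<in> carrier L \<Longrightarrow> x \<in> U' \<Longrightarrow> smult M' a x \<in> U'"
    unfolding U'_def lker_def using f's sN0 sm'c by auto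
  have U'neg: "\<And>x. x \<in> U' \<Longrightarrow> \<ominus>\<^bsub>M'\<^esub> x \<in> U'"
    unfolding U'_def lker_def using f'neg by auto
  have U'0: "\<zero>\<^bsub>M'\<^esub> \<in> U'" unfolding U'_def lker_def using f'0 by auto
  obtain g where g: "lhom L (subm M U) (subm M' U') g" "bij_betw g U U'"
    using assms(9) unfolding liso_def U_def U'_def by auto
  define \<phi> where "\<phi> = inv_into U g"
  have \<phi>b: "bij_betw \<phi> U' U" unfolding \<phi>_def using g(2) by (rule bij_betw_inv_into)
  have g\<phi>: "\<And>y. y \<in> U' \<Longrightarrow> g (\<phi> y) = y" unfolding \<phi>_def using g(2)
    by (simp add: bij_betw_inv_into_right)
  have ga: "\<And>x y. x \<in> U \<Longrightarrow> y \<in> U \<Longrightarrow> g (x \<oplus>\<^bsub>M\<^esub> y) = g x \<oplus>\<^bsub>M'\<^esub> g y"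
    using g(1) unfolding lhom_def by simp
  have gs: "\<And>a x. a \<in> carrier L \<Longrightarrow> x \<in> U \<Longrightarrow> g (smult M a x) = smult M' a (g x)"
    using g(1) unfolding lhom_def by simp
  have \<phi>U: "\<And>y. y \<in> U' \<Longrightarrow> \<phi> y \<in> U" using \<phi>b bij_betwE by blast
  have ginj: "inj_on g U" using g(2) bij_betw_def by blast
  have \<phi>a: "\<And>x y. x \<in> U' \<Longrightarrow> y \<in> U' \<Longrightarrow> \<phi> (x \<oplus>\<^bsub>M'\<^esub> y) = \<phi> x \<oplus>\<^bsub>M\<^esub> \<phi> y"
  proof -
    fix x y assume xy: "x \<in> U'" "y \<in> U'"
    have "g (\<phi> x \<oplus>\<^bsub>M\<^esub> \<phi> y) = x \<oplus>\<^bsub>M'\<^esub> y" using ga \<phi>U g\<phi> xy by simp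
    moreover have "g (\<phi> (x \<oplus>\<^bsub>M'\<^esub> y)) = x \<oplus>\<^bsub>M'\<^esub> y" using g\<phi> U'add xy by simp
    ultimately show "\<phi> (x \<oplus>\<^bsub>M'\<^esub> y) = \<phi> x \<oplus>\<^bsub>M\<^esub> \<phi> y"
      using ginj \<phi>U Uadd U'add xy by (metis inj_onD)
  qed
  have \<phi>s: "\<And>a x. a \<in> carrier L \<Longrightarrow> x \<in> U' \<Longrightarrow> \<phi> (smult M' a x) = smult M a (\<phi> x)"
  proof -
    fix a x assume ax: "a \<in> carrier L" "x \<in> U'"
    have "g (smult M a (\<phi> x)) = smult M' a x" using gs \<phi>U g\<phi> ax by simp
    moreover have "g (\<phi> (smult M' a x)) = smult M' a x" using g\<phi> U'sm ax by simp
    ultimately show "\<phi> (smult M' a x) = smult M a (\<phi> x)"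
      using ginj \<phi>U Usm U'sm ax by (metis inj_onD)
  qed
  define K where "K = subm M' U'"
  have negK: "\<And>x. x \<in> U' \<Longrightarrow> \<ominus>\<^bsub>K\<^esub> x = \<ominus>\<^bsub>M'\<^esub> x"
  proof -
    have agK: "abelian_group K"
    proof (rule abelian_groupI)
      show "\<And>x y. x \<in> carrier K \<Longrightarrow> y \<in> carrier K \<Longrightarrow> x \<oplus>\<^bsub>K\<^esub> y \<in> carrier K"
        unfolding K_def using U'add by simp
      show "\<zero>\<^bsub>K\<^esub> \<in> carrier K" unfolding K_def using U'0 by simp
      show "\<And>x y z. x \<in> carrier K \<Longrightarrow> y \<in> carrier K \<Longrightarrow> z \<in> carrier K \<Longrightarrow> x \<oplus>\<^bsub>K\<^esub> y \<oplus>\<^bsub>K\<^esub> z = x \<oplus>\<^bsub>K\<^esub> (y \<oplus>\<^bsub>K\<^esub> z)"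
        unfolding K_def using U'M' by (simp add: M'.a_assoc subset_iff)
      show "\<And>x y. x \<in> carrier K \<Longrightarrow> y \<in> carrier K \<Longrightarrow> x \<oplus>\<^bsub>K\<^esub> y = y \<oplus>\<^bsub>K\<^esub> x"
        unfolding K_def using U'M' by (simp add: M'.a_comm subset_iff)
      show "\<And>x. x \<in> carrier K \<Longrightarrow> \<zero>\<^bsub>K\<^esub> \<oplus>\<^bsub>K\<^esub> x = x"
        unfolding K_def using U'M' by (simp add: subset_iff)
      show "\<And>x. x \<in> carrier K \<Longrightarrow> \<exists>y\<in>carrier K. y \<oplus>\<^bsub>K\<^esub> x = \<zero>\<^bsub>K\<^esub>"
        unfolding K_def using U'M' U'neg by (simp add: subset_iff) (metis M'.l_neg)
    qed
    fix x assume x: "x \<in> U'"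
    have "\<ominus>\<^bsub>M'\<^esub> x \<oplus>\<^bsub>K\<^esub> x = \<zero>\<^bsub>K\<^esub>" unfolding K_def using x U'M' by (simp add: M'.l_neg subset_iff)
    then show "\<ominus>\<^bsub>K\<^esub> x = \<ominus>\<^bsub>M'\<^esub> x"
      using abelian_group.minus_equality[OF agK, of "\<ominus>\<^bsub>M'\<^esub> x" x] x U'neg unfolding K_def by simp
  qed
  have flK: "finite_length L K"
    unfolding finite_length_def
  proof (intro conjI)
    show "lmodule L K"
      unfolding lmodule_def
    proof (intro conjI ballI)
      show "ring L" using lmM' unfolding lmodule_def by auto
      show "abelian_group K"
      proof (rule abelian_groupI)
        show "\<And>x y. x \<in> carrier K \<Longrightarrow> y \<in> carrier K \<Longrightarrow> x \<oplus>\<^bsub>K\<^esub> y \<in> carrier K"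
          unfolding K_def using U'add by simp
        show "\<zero>\<^bsub>K\<^esub> \<in> carrier K" unfolding K_def using U'0 by simp
        show "\<And>x y z. x \<in> carrier K \<Longrightarrow> y \<in> carrier K \<Longrightarrow> z \<in> carrier K \<Longrightarrow> x \<oplus>\<^bsub>K\<^esub> y \<oplus>\<^bsub>K\<^esub> z = x \<oplus>\<^bsub>K\<^esub> (y \<oplus>\<^bsub>K\<^esub> z)"
          unfolding K_def using U'M' by (simp add: M'.a_assoc subset_iff)
        show "\<And>x y. x \<in> carrier K \<Longrightarrow> y \<in> carrier K \<Longrightarrow> x \<oplus>\<^bsub>K\<^esub> y = y \<oplus>\<^bsub>K\<^esub> x"
          unfolding K_def using U'M' by (simp add: M'.a_comm subset_iff)
        show "\<And>x. x \<in> carrier K \<Longrightarrow> \<zero>\<^bsub>K\<^esub> \<oplus>\<^bsub>K\<^esub> x = x"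
          unfolding K_def using U'M' by (simp add: subset_iff)
        show "\<And>x. x \<in> carrier K \<Longrightarrow> \<exists>y\<in>carrier K. y \<oplus>\<^bsub>K\<^esub> x = \<zero>\<^bsub>K\<^esub>"
          unfolding K_def using U'M' U'neg by (simp add: subset_iff) (metis M'.l_neg)
      qed
        qed (use U'M' U'sm sm'1 sm'2 sm'3 sm'4 in \<open>auto simp: K_def subset_iff\<close>)
    obtain n where n: "\<forall>(k::nat) (c::nat \<Rightarrow> 'c set).
        (\<forall>i\<le>k. lsubmodule L (c i) M') \<and> (\<forall>i<k. c i \<subset> c (Suc i)) \<longrightarrow> k \<le> n"
      using assms(3) unfolding finite_length_def by blast
    have sub: "\<And>S. lsubmodule L S K \<Longrightarrow> lsubmodule L S M'"
    proof -
      fix S assume a: "lsubmodule L S K"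
      then have SU: "S \<subseteq> U'" unfolding lsubmodule_def by (simp add: K_def)
      have "\<forall>x\<in>S. \<ominus>\<^bsub>M'\<^esub> x \<in> S"
        using a SU negK unfolding lsubmodule_def by (metis subsetD)
      then show "lsubmodule L S M'" using a SU U'M' unfolding lsubmodule_def by (auto simp: K_def)
    qed
    show "\<exists>n. \<forall>(k::nat) (c::nat \<Rightarrow> 'c set).
        (\<forall>i\<le>k. lsubmodule L (c i) K) \<and> (\<forall>i<k. c i \<subset> c (Suc i)) \<longrightarrow> k \<le> n"
      using n sub by blast
  qed
  define i where "i = (\<lambda>u. (\<ominus>\<^bsub>M'\<^esub> h (\<phi> u), \<phi> u))"
  define p where "p = (\<lambda>q. fst q \<oplus>\<^bsub>M'\<^esub> h (snd q))"
  have hUM': "\<And>u. u \<in> U' \<Longrightarrow> h (\<phi> u) \<in> carrier M'" using \<phi>U UM hc by blast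
  show ?thesis unfolding rz_degeneration_def
  proof (intro exI conjI)
    show "finite_length L K" by fact
    show "lhom L K (dsum K M) i"
      unfolding lhom_def
    proof (intro conjI ballI)
      show "i \<in> carrier K \<rightarrow> carrier (dsum K M)"
        using \<phi>U U'neg hU UM by (auto simp: i_def K_def)
      fix x y assume xy: "x \<in> carrier K" "y \<in> carrier K"
      then have xy': "x \<in> U'" "y \<in> U'" by (auto simp: K_def)
      show "i (x \<oplus>\<^bsub>K\<^esub> y) = i x \<oplus>\<^bsub>dsum K M\<^esub> i y"
        using xy' \<phi>a \<phi>U UM ha hUM' by (auto simp: i_def K_def subset_iff M'.minus_add)
    next
      fix a x assume ax: "a \<in> carrier L" "x \<in> carrier K"
      then have x': "x \<in> U'" by (auto simp: K_def)
      show "i (smult K a x) = smult (dsum K M) a (i x)"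
        using x' ax \<phi>s \<phi>U UM hs hUM' lmodule_smult_neg[OF lmM' ax(1)]
        by (auto simp: i_def K_def subset_iff)
    qed
    show "inj_on i (carrier K)"
      using \<phi>b unfolding bij_betw_def inj_on_def by (auto simp: i_def K_def)
    show "lhom L (dsum K M) M' p"
      unfolding lhom_def
    proof (intro conjI ballI)
      show "p \<in> carrier (dsum K M) \<rightarrow> carrier M'"
        using U'M' hc by (auto simp: p_def K_def)
      fix x y assume "x \<in> carrier (dsum K M)" "y \<in> carrier (dsum K M)"
      then have x: "fst x \<in> U'" "snd x \<in> carrier M" and y: "fst y \<in> U'" "snd y \<in> carrier M"
        by (auto simp: K_def)
      have c: "fst x \<in> carrier M'" "fst y \<in> carrier M'" "h (snd x) \<in> carrier M'" "h (snd y) \<in> carrier M'"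
        using x y U'M' hc by auto
      show "p (x \<oplus>\<^bsub>dsum K M\<^esub> y) = p x \<oplus>\<^bsub>M'\<^esub> p y"
        using x y c by (simp add: p_def K_def ha M'.a_ac)
    next
      fix a x assume "a \<in> carrier L" "x \<in> carrier (dsum K M)"
      then show "p (smult (dsum K M) a x) = smult M' a (p x)"
        using U'M' hc hs sm'2 by (auto simp: p_def K_def subset_iff)
    qed
    show "p ` carrier (dsum K M) = carrier M'"
    proof
      show "p ` carrier (dsum K M) \<subseteq> carrier M'"
        using U'M' hc by (auto simp: p_def K_def)
      show "carrier M' \<subseteq> p ` carrier (dsum K M)"
      proof
        fix z assume z: "z \<in> carrier M'"
        then obtain x where x: "x \<in> carrier M" "f x = f' z" using assms(6,8) f'c
          by (metis imageE image_eqI)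
        have u: "z \<oplus>\<^bsub>M'\<^esub> \<ominus>\<^bsub>M'\<^esub> h x \<in> U'"
          using z x hc f'a f'neg assms(11) f'c unfolding U'_def lker_def
          by (simp add: N.r_neg)
        have "p (z \<oplus>\<^bsub>M'\<^esub> \<ominus>\<^bsub>M'\<^esub> h x, x) = z"
          using z x hc by (simp add: p_def M'.a_assoc M'.l_neg)
        moreover have "(z \<oplus>\<^bsub>M'\<^esub> \<ominus>\<^bsub>M'\<^esub> h x, x) \<in> carrier (dsum K M)"
          using u x by (simp add: K_def)
        ultimately show "z \<in> p ` carrier (dsum K M)" by (metis image_eqI)
      qed
    qed
    show "i ` carrier K = lker (dsum K M) M' p"
    proof
      show "i ` carrier K \<subseteq> lker (dsum K M) M' p"
        using \<phi>U U'neg hU hUM' UM by (auto simp: i_def K_def lker_def p_def M'.l_neg)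
      show "lker (dsum K M) M' p \<subseteq> i ` carrier K"
      proof
        fix q assume q: "q \<in> lker (dsum K M) M' p"
        obtain u x where qq: "q = (u, x)" by (cases q)
        have ux: "u \<in> U'" "x \<in> carrier M" "u \<oplus>\<^bsub>M'\<^esub> h x = \<zero>\<^bsub>M'\<^esub>"
          using q by (auto simp: qq lker_def K_def p_def)
        have uc: "u \<in> carrier M'" using ux U'M' by auto
        have hx: "h x = \<ominus>\<^bsub>M'\<^esub> u" using ux uc hc
          by (metis M'.a_comm M'.minus_equality)
        have "f x = \<zero>\<^bsub>N\<^esub>" using assms(11) ux hx f'neg uc U'_def lker_def
          by (simp add: lker_def U'_def)
        then have xU: "x \<in> U" using ux unfolding U_def lker_def by auto
        have "g x \<in> U'" using g(2) xU bij_betwE by blast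
        have \<phi>g: "\<phi> (g x) = x" unfolding \<phi>_def using g(2) xU
          by (simp add: bij_betw_inv_into_left)
        have "i (g x) = q" using \<phi>g hx uc by (simp add: i_def qq)
        then show "q \<in> i ` carrier K" using \<open>g x \<in> U'\<close> by (auto simp: K_def)
      qed
    qed
  qed
qed

end
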